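(* Suppose that an $(R,M,\epsilon)$-code exists for a given DMC with feedback. Then for every $0<\alpha<1$ there also exists an $(R',M,\epsilon')$-code for the same channel, where $$R'=(1-\alpha)^{-1}R,\qquad \epsilon'=\alpha+\epsilon-\alpha\epsilon.$$
   Context: All logarithms are to base 2. A DMC has finite input and output alphabets and transition probabilities $p(y\mid x)$, used memorylessly, with noiseless feedback from receiver to transmitter. A rateless code for $M$ equiprobable messages $W\in\{1,\dots,M\}$ consists of infinite-length codewords $\mathbf c_w\in\mathcal X^\infty$ (generated randomly i.i.d. from an input prior $q$), an encoder that transmits the symbols of $\mathbf c_W$ one by one, and a decoder that after receiving $y^n$ outputs $g_n(y^n)\in\{0,1,\dots,M\}$ ($0$ meaning "wait"); decoders may use private randomness, and may terminate a transmission immediately (before receiving any symbol, i.e. with stopping time $0$) by declaring an error. The stopping time $T$ is the time at which the decoder makes its decision $\hat W$. The error probability is $P_e=\frac1M\sum_w\Pr\{\hat W\ne w\mid W=w\}$ and the effective rate is $R=\log M/\mathbb E\{T\}$, with expectation over codebook, message, channel (and decoder randomness). An $(R,M,\epsilon)$-code is a rateless code with effective rate $R$, $M$ messages and $P_e\le\epsilon$. *)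

theory Defs
  imports "HOL-Probability.Probability"
begin

text \<open>
A DMC with finite input type 'x and finite output type 'y is a map
  W :: 'x => 'y pmf  (W x is the output distribution p(. | x)).
Messages are 1..M.  A codebook is  c :: nat => nat => 'x  with  c w i  the
i-th symbol (i = 0,1,2,...) of codeword c_w.  The codebook is random with all
symbols c w i (w in 1..M, i in nat) i.i.d. according to the input prior q.
The decoder's private randomness is a single uniform random variable U on [0,1]
(this generates any standard randomness).  A decoder is a function
  g :: (nat => nat => 'x) => real => 'y list => nat
where  g c u ys  is the decision after receiving the output prefix ys:
0 means "wait", a value in 1..M is the decoded message, and any other value
(> M) means "declare an error".

Since for a fixed transmitted message w the pairs (column of the codebook at
time i, channel output at time i) are i.i.d. over i, the joint law of codebook
and channel outputs is the infinite product of the one-step law below.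
\<close>

definition col_pmf :: "'x pmf \<Rightarrow> nat \<Rightarrow> (nat \<Rightarrow> 'x) pmf" where
  "col_pmf q M = Pi_pmf {1..M} undefined (\<lambda>_. q)"

definition step_pmf :: "('x \<Rightarrow> 'y pmf) \<Rightarrow> 'x pmf \<Rightarrow> nat \<Rightarrow> nat \<Rightarrow> ((nat \<Rightarrow> 'x) \<times> 'y) pmf" where
  "step_pmf W q M w = bind_pmf (col_pmf q M) (\<lambda>col. map_pmf (\<lambda>y. (col, y)) (W (col w)))"

definition joint :: "('x \<Rightarrow> 'y pmf) \<Rightarrow> 'x pmf \<Rightarrow> nat \<Rightarrow> nat
    \<Rightarrow> ((nat \<Rightarrow> (nat \<Rightarrow> 'x) \<times> 'y) \<times> real) measure" where
  "joint W q M w =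
     (PiM UNIV (\<lambda>_::nat. measure_pmf (step_pmf W q M w)))
       \<Otimes>\<^sub>M uniform_measure lborel {0..1}"

definition codebook_of :: "(nat \<Rightarrow> (nat \<Rightarrow> 'x) \<times> 'y) \<Rightarrow> nat \<Rightarrow> nat \<Rightarrow> 'x" where
  "codebook_of Z = (\<lambda>w i. fst (Z i) w)"

definition prefix_of :: "(nat \<Rightarrow> (nat \<Rightarrow> 'x) \<times> 'y) \<Rightarrow> nat \<Rightarrow> 'y list" where
  "prefix_of Z n = map (\<lambda>i. snd (Z i)) [0..<n]"

definition dec_at :: "((nat \<Rightarrow> nat \<Rightarrow> 'x) \<Rightarrow> real \<Rightarrow> 'y list \<Rightarrow> nat)
    \<Rightarrow> (nat \<Rightarrow> (nat \<Rightarrow> 'x) \<times> 'y) \<times> real \<Rightarrow> nat \<Rightarrow> nat" where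
  "dec_at g zu n = g (codebook_of (fst zu)) (snd zu) (prefix_of (fst zu) n)"

definition stop_time :: "((nat \<Rightarrow> nat \<Rightarrow> 'x) \<Rightarrow> real \<Rightarrow> 'y list \<Rightarrow> nat)
    \<Rightarrow> (nat \<Rightarrow> (nat \<Rightarrow> 'x) \<times> 'y) \<times> real \<Rightarrow> enat" where
  "stop_time g zu = (if \<exists>n. dec_at g zu n \<noteq> 0 then enat (LEAST n. dec_at g zu n \<noteq> 0) else \<infinity>)"

definition decodes_correctly :: "((nat \<Rightarrow> nat \<Rightarrow> 'x) \<Rightarrow> real \<Rightarrow> 'y list \<Rightarrow> nat)
    \<Rightarrow> nat \<Rightarrow> (nat \<Rightarrow> (nat \<Rightarrow> 'x) \<times> 'y) \<times> real \<Rightarrow> bool" where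
  "decodes_correctly g w zu =
     (\<exists>n. stop_time g zu = enat n \<and> dec_at g zu n = w)"

definition decoder_measurable :: "('x \<Rightarrow> 'y pmf) \<Rightarrow> 'x pmf \<Rightarrow> nat
    \<Rightarrow> ((nat \<Rightarrow> nat \<Rightarrow> 'x) \<Rightarrow> real \<Rightarrow> 'y list \<Rightarrow> nat) \<Rightarrow> bool" where
  "decoder_measurable W q M g =
     (\<forall>w\<in>{1..M}. \<forall>n d. {zu \<in> space (joint W q M w). dec_at g zu n = d} \<in> sets (joint W q M w))"

definition exp_stop_time :: "('x \<Rightarrow> 'y pmf) \<Rightarrow> 'x pmf \<Rightarrow> nat
    \<Rightarrow> ((nat \<Rightarrow> nat \<Rightarrow> 'x) \<Rightarrow> real \<Rightarrow> 'y list \<Rightarrow> nat) \<Rightarrow> ennreal" where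
  "exp_stop_time W q M g =
     (\<Sum>w\<in>{1..M}. \<integral>\<^sup>+ zu. ennreal_of_enat (stop_time g zu) \<partial>joint W q M w) / of_nat M"

definition error_prob :: "('x \<Rightarrow> 'y pmf) \<Rightarrow> 'x pmf \<Rightarrow> nat
    \<Rightarrow> ((nat \<Rightarrow> nat \<Rightarrow> 'x) \<Rightarrow> real \<Rightarrow> 'y list \<Rightarrow> nat) \<Rightarrow> real" where
  "error_prob W q M g =
     (\<Sum>w\<in>{1..M}. measure (joint W q M w)
        {zu \<in> space (joint W q M w). \<not> decodes_correctly g w zu}) / real M"

definition is_code :: "('x \<Rightarrow> 'y pmf) \<Rightarrow> 'x pmf \<Rightarrow> ((nat \<Rightarrow> nat \<Rightarrow> 'x) \<Rightarrow> real \<Rightarrow> 'y list \<Rightarrow> nat)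
    \<Rightarrow> real \<Rightarrow> nat \<Rightarrow> real \<Rightarrow> bool" where
  "is_code W q g R M eps =
     (M \<ge> 1 \<and> decoder_measurable W q M g \<and>
      0 < exp_stop_time W q M g \<and> exp_stop_time W q M g < \<infinity> \<and>
      R = log 2 (real M) / enn2real (exp_stop_time W q M g) \<and>
      error_prob W q M g \<le> eps)"

end

theory Submission
  imports Defs
begin

lemma ennreal_div1: "(x::ennreal) / 1 = x" by (simp add: divide_ennreal_def)

lemma inner:
  fixes f :: "real \<Rightarrow> ennreal" and a :: real
  assumes f[measurable]: "f \<in> borel_measurable borel" and a: "0 < a" "a < 1"
  shows "(\<integral>\<^sup>+u. (if u \<le> a then c else f ((u - a)/(1-a))) \<partial>uniform_measure lborel {0..1})
         = ennreal a * c + ennreal (1-a) * (\<integral>\<^sup>+v. f v \<partial>uniform_measure lborel {0..1})"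
proof -
  have m: "(\<lambda>u. (if u \<le> a then c else f ((u - a)/(1-a)))) \<in> borel_measurable borel" by measurable
  have "(\<integral>\<^sup>+u. (if u \<le> a then c else f ((u - a)/(1-a))) \<partial>uniform_measure lborel {0..1})
      = (\<integral>\<^sup>+u. (if u \<le> a then c else f ((u - a)/(1-a))) * indicator {0..1} u \<partial>lborel)"
    using m by (subst nn_integral_uniform_measure) (simp_all add: ennreal_div1)
  also have "\<dots> = (\<integral>\<^sup>+u. c * indicator {0..a} u + f ((u - a)/(1-a)) * indicator {a<..1} u \<partial>lborel)"
    using a by (intro nn_integral_cong) (auto simp: indicator_def)
  also have "\<dots> = (\<integral>\<^sup>+u. c * indicator {0..a} u \<partial>lborel) + (\<integral>\<^sup>+u. f ((u - a)/(1-a)) * indicator {a<..1} u \<partial>lborel)"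
    by (rule nn_integral_add) measurable
  also have "(\<integral>\<^sup>+u. c * indicator {0..a} u \<partial>lborel) = c * ennreal a"
    using a by (subst nn_integral_cmult_indicator) auto
  also have "(\<integral>\<^sup>+u. f ((u - a)/(1-a)) * indicator {a<..1} u \<partial>lborel)
      = ennreal \<bar>1-a\<bar> * (\<integral>\<^sup>+x. f ((a + (1-a)*x - a)/(1-a)) * indicator {a<..1} (a + (1-a)*x) \<partial>lborel)"
  proof (rule nn_integral_real_affine)
    show "(\<lambda>u. f ((u - a)/(1-a)) * indicator {a<..1} u) \<in> borel_measurable borel" by measurable
  qed (use a in auto)
  also have "(\<integral>\<^sup>+x. f ((a + (1-a)*x - a)/(1-a)) * indicator {a<..1} (a + (1-a)*x) \<partial>lborel)
      = (\<integral>\<^sup>+x. f x * indicator {0<..1} x \<partial>lborel)"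
  proof (intro nn_integral_cong)
    fix x :: real
    have 1: "a < a + (1-a)*x \<longleftrightarrow> 0 < x" using a by (simp add: zero_less_mult_iff)
    have 2: "a + (1-a)*x \<le> 1 \<longleftrightarrow> x \<le> 1"
    proof -
      have "a + (1-a)*x \<le> 1 \<longleftrightarrow> (1-a)*x \<le> (1-a)*1" by (simp only: mult_1_right) linarith
      also have "\<dots> \<longleftrightarrow> x \<le> 1" using a by (intro mult_le_cancel_left_pos) simp
      finally show ?thesis .
    qed
    have 3: "(a + (1-a)*x - a)/(1-a) = x" using a by simp
    show "f ((a + (1-a)*x - a)/(1-a)) * indicator {a<..1} (a + (1-a)*x) = f x * indicator {0<..1} x"
      using 1 2 3 by (simp add: indicator_def)
  qed
  also have "(\<integral>\<^sup>+x. f x * indicator {0<..1} x \<partial>lborel) = (\<integral>\<^sup>+x. f x * indicator {0..1} x \<partial>lborel)"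
  proof (rule nn_integral_cong_AE)
    have "AE x in lborel. x \<noteq> 0" by (rule AE_lborel_singleton)
    then show "AE x in lborel. f x * indicator {0<..1} x = f x * indicator {0..1} x"
      by eventually_elim (auto simp: indicator_def)
  qed
  also have "\<dots> = (\<integral>\<^sup>+v. f v \<partial>uniform_measure lborel {0..1})"
    by (subst nn_integral_uniform_measure) (simp_all add: ennreal_div1)
  finally show ?thesis using a by (simp add: mult.commute)
qed

abbreviation UU :: "real measure" where "UU \<equiv> uniform_measure lborel {0..1}"

lemma UU_prob: "prob_space UU"
  by (rule prob_space_uniform_measure) auto

lemma sets_UU: "sets UU = sets borel" by simp

lemma phi_meas: "(\<lambda>zu. (fst zu, (snd zu - a)/(1-a))) \<in> measurable (N \<Otimes>\<^sub>M UU) (N \<Otimes>\<^sub>M UU)"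
proof (rule measurable_Pair)
  show "(\<lambda>zu. (snd zu - a) / (1 - a)) \<in> measurable (N \<Otimes>\<^sub>M UU) UU"
    by (simp add: measurable_cong_sets[OF refl sets_UU])
qed simp
lemma outer:
  fixes h :: "'a \<times> real \<Rightarrow> ennreal" and a :: real
  assumes h[measurable]: "h \<in> borel_measurable (N \<Otimes>\<^sub>M UU)" and c[measurable]: "c \<in> borel_measurable N"
    and a: "0 < a" "a < 1"
  shows "(\<integral>\<^sup>+zu. (if snd zu \<le> a then c (fst zu) else h (fst zu, (snd zu - a)/(1-a))) \<partial>(N \<Otimes>\<^sub>M UU))
     = ennreal a * (\<integral>\<^sup>+z. c z \<partial>N) + ennreal (1-a) * (\<integral>\<^sup>+zu. h zu \<partial>(N \<Otimes>\<^sub>M UU))"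
proof -
  interpret U: prob_space UU by (rule UU_prob)
  have hp: "(\<lambda>zu. h (fst zu, (snd zu - a)/(1-a))) \<in> borel_measurable (N \<Otimes>\<^sub>M UU)"
    using measurable_compose[OF phi_meas h] by (simp add: o_def)
  have sn: "(\<lambda>zu. snd zu) \<in> borel_measurable (N \<Otimes>\<^sub>M UU)"
    using measurable_snd[of N UU] by (simp add: measurable_cong_sets[OF refl sets_UU])
  have pr: "{zu \<in> space (N \<Otimes>\<^sub>M UU). snd zu \<le> a} \<in> sets (N \<Otimes>\<^sub>M UU)"
    using sn by measurable
  have F: "(\<lambda>zu. (if snd zu \<le> a then c (fst zu) else h (fst zu, (snd zu - a)/(1-a)))) \<in> borel_measurable (N \<Otimes>\<^sub>M UU)"
    by (rule measurable_If[OF measurable_compose[OF measurable_fst c] hp pr])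
  have hz: "(\<lambda>v. h (z, v)) \<in> borel_measurable borel" if "z \<in> space N" for z
  proof -
    have eq: "measurable UU (borel :: ennreal measure) = measurable borel borel"
      by (rule measurable_cong_sets[OF sets_UU refl])
    show ?thesis using measurable_Pair2[OF h that] unfolding eq .
  qed
  have ni[measurable]: "(\<lambda>z. \<integral>\<^sup>+v. h (z, v) \<partial>UU) \<in> borel_measurable N"
    by (rule U.borel_measurable_nn_integral_fst[OF h])
  have "(\<integral>\<^sup>+zu. (if snd zu \<le> a then c (fst zu) else h (fst zu, (snd zu - a)/(1-a))) \<partial>(N \<Otimes>\<^sub>M UU))
      = (\<integral>\<^sup>+z. \<integral>\<^sup>+u. (if u \<le> a then c z else h (z, (u - a)/(1-a))) \<partial>UU \<partial>N)"
    using U.nn_integral_fst[OF F, symmetric] unfolding fst_conv snd_conv .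
  also have "\<dots> = (\<integral>\<^sup>+z. ennreal a * c z + ennreal (1-a) * (\<integral>\<^sup>+v. h (z, v) \<partial>UU) \<partial>N)"
    by (rule nn_integral_cong, rule inner[OF hz a], assumption)
  also have "\<dots> = (\<integral>\<^sup>+z. ennreal a * c z \<partial>N) + (\<integral>\<^sup>+z. ennreal (1-a) * (\<integral>\<^sup>+v. h (z, v) \<partial>UU) \<partial>N)"
    by (rule nn_integral_add) measurable
  also have "\<dots> = ennreal a * (\<integral>\<^sup>+z. c z \<partial>N) + ennreal (1-a) * (\<integral>\<^sup>+z. (\<integral>\<^sup>+v. h (z, v) \<partial>UU) \<partial>N)"
    by (simp only: nn_integral_cmult[OF c] nn_integral_cmult[OF ni])
  also have "(\<integral>\<^sup>+z. (\<integral>\<^sup>+v. h (z, v) \<partial>UU) \<partial>N) = (\<integral>\<^sup>+zu. h zu \<partial>(N \<Otimes>\<^sub>M UU))"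
    by (rule U.nn_integral_fst[OF h])
  finally show ?thesis .
qed
lemma snd_le_sets: "{zu \<in> space (N \<Otimes>\<^sub>M UU). snd zu \<le> a} \<in> sets (N \<Otimes>\<^sub>M UU)"
proof -
  have sn: "(\<lambda>zu. snd zu) \<in> borel_measurable (N \<Otimes>\<^sub>M UU)"
    using measurable_snd[of N UU] by (simp add: measurable_cong_sets[OF refl sets_UU])
  show ?thesis using sn by measurable
qed

definition gmod :: "nat \<Rightarrow> real \<Rightarrow> ((nat \<Rightarrow> nat \<Rightarrow> 'x) \<Rightarrow> real \<Rightarrow> 'y list \<Rightarrow> nat)
   \<Rightarrow> ((nat \<Rightarrow> nat \<Rightarrow> 'x) \<Rightarrow> real \<Rightarrow> 'y list \<Rightarrow> nat)" where
  "gmod M a g = (\<lambda>c u ys. if u \<le> a then Suc M else g c ((u - a)/(1-a)) ys)"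

lemma dec_at_gmod: "dec_at (gmod M a g) zu n = (if snd zu \<le> a then Suc M else dec_at g (fst zu, (snd zu - a)/(1-a)) n)"
  by (simp add: dec_at_def gmod_def)

lemma stop_gmod: "stop_time (gmod M a g) zu = (if snd zu \<le> a then 0 else stop_time g (fst zu, (snd zu - a)/(1-a)))"
  by (simp add: stop_time_def dec_at_gmod zero_enat_def)

lemma dc_gmod: "w \<le> M \<Longrightarrow> decodes_correctly (gmod M a g) w zu = (if snd zu \<le> a then False else decodes_correctly g w (fst zu, (snd zu - a)/(1-a)))"
  by (auto simp: decodes_correctly_def stop_gmod dec_at_gmod zero_enat_def)

lemma stop_enat: "stop_time g zu = enat k \<longleftrightarrow> (\<forall>m<k. dec_at g zu m = 0) \<and> dec_at g zu k \<noteq> 0"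
proof
  assume h: "stop_time g zu = enat k"
  then have ex: "\<exists>n. dec_at g zu n \<noteq> 0" by (auto simp: stop_time_def split: if_splits)
  then have k: "k = (LEAST n. dec_at g zu n \<noteq> 0)" using h by (simp add: stop_time_def)
  show "(\<forall>m<k. dec_at g zu m = 0) \<and> dec_at g zu k \<noteq> 0"
    using k ex by (metis (mono_tags, lifting) LeastI not_less_Least)
next
  assume h: "(\<forall>m<k. dec_at g zu m = 0) \<and> dec_at g zu k \<noteq> 0"
  then have "(LEAST n. dec_at g zu n \<noteq> 0) = k"
    by (intro Least_equality) (auto simp: not_less[symmetric])
  then show "stop_time g zu = enat k" using h by (auto simp: stop_time_def)
qed

lemma stop_inf: "stop_time g zu = \<infinity> \<longleftrightarrow> (\<forall>n. dec_at g zu n = 0)"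
  by (simp add: stop_time_def)

lemma dec_meas:
  assumes "\<And>d. {zu \<in> space J. dec_at g zu n = d} \<in> sets J"
  shows "(\<lambda>zu. dec_at g zu n) \<in> measurable J (count_space UNIV)"
  unfolding measurable_count_space_eq2_countable
proof safe
  fix d :: nat
  have "(\<lambda>zu. dec_at g zu n) -` {d} \<inter> space J = {zu \<in> space J. dec_at g zu n = d}" by auto
  then show "(\<lambda>zu. dec_at g zu n) -` {d} \<inter> space J \<in> sets J" using assms by simp
qed simp

lemma stop_meas:
  assumes dm[measurable]: "\<And>n. (\<lambda>zu. dec_at g zu n) \<in> measurable J (count_space UNIV)"
  shows "stop_time g \<in> measurable J (count_space UNIV)"
  unfolding measurable_count_space_eq2_countable
proof safe
  fix x :: enat
  show "stop_time g -` {x} \<inter> space J \<in> sets J"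
  proof (cases x)
    case (enat k)
    have "stop_time g -` {x} \<inter> space J = {zu \<in> space J. (\<forall>m. m < k \<longrightarrow> dec_at g zu m = 0) \<and> dec_at g zu k \<noteq> 0}"
      using enat by (auto simp: stop_enat)
    also have "\<dots> \<in> sets J" by measurable
    finally show ?thesis .
  next
    case infinity
    have "stop_time g -` {x} \<inter> space J = {zu \<in> space J. (\<forall>n. dec_at g zu n = 0)}"
      using infinity by (auto simp: stop_inf)
    also have "\<dots> \<in> sets J" by measurable
    finally show ?thesis .
  qed
qed simp

lemma dc_meas:
  assumes dm[measurable]: "\<And>n. (\<lambda>zu. dec_at g zu n) \<in> measurable J (count_space UNIV)"
  shows "{zu \<in> space J. \<not> decodes_correctly g w zu} \<in> sets J"
proof -
  have [measurable]: "stop_time g \<in> measurable J (count_space UNIV)" by (rule stop_meas[OF dm])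
  show ?thesis unfolding decodes_correctly_def by measurable
qed

theorem lemma1:
  fixes W :: "'x::finite \<Rightarrow> 'y::finite pmf"
    and R eps alpha :: real and M :: nat
  assumes "\<exists>q g. is_code W q g R M eps"
    and "0 < alpha" and "alpha < 1"
  shows "\<exists>q' g'. is_code W q' g' (R / (1 - alpha)) M (alpha + eps - alpha * eps)"
proof -
  obtain q g where code: "is_code W q g R M eps" using assms(1) by blast
  define g' where "g' = gmod M alpha g"
  let ?N = "\<lambda>w. PiM UNIV (\<lambda>_::nat. measure_pmf (step_pmf W q M w))"
  have J: "\<And>w. joint W q M w = ?N w \<Otimes>\<^sub>M UU" by (simp add: joint_def)
  have Nprob: "\<And>w. prob_space (?N w)" by (intro prob_space_PiM measure_pmf.prob_space_axioms)
  have Jprob: "\<And>w. prob_space (joint W q M w)" unfolding J by (intro prob_space_pair Nprob UU_prob)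
  from code have M1: "M \<ge> 1" and dmg: "decoder_measurable W q M g"
    and Epos: "0 < exp_stop_time W q M g" and Efin: "exp_stop_time W q M g < \<infinity>"
    and Rdef: "R = log 2 (real M) / enn2real (exp_stop_time W q M g)"
    and Pe: "error_prob W q M g \<le> eps"
    unfolding is_code_def by auto
  have dm: "\<And>w n. w \<in> {1..M} \<Longrightarrow> (\<lambda>zu. dec_at g zu n) \<in> measurable (joint W q M w) (count_space UNIV)"
    using dmg unfolding decoder_measurable_def by (intro dec_meas) auto
  have phiJ: "\<And>w. (\<lambda>zu. (fst zu, (snd zu - alpha)/(1-alpha))) \<in> measurable (joint W q M w) (joint W q M w)"
    unfolding J by (rule phi_meas)
  have sJ: "\<And>w. {zu \<in> space (joint W q M w). snd zu \<le> alpha} \<in> sets (joint W q M w)"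
    unfolding J by (rule snd_le_sets)
  have dm': "(\<lambda>zu. dec_at g' zu n) \<in> measurable (joint W q M w) (count_space UNIV)" if w: "w \<in> {1..M}" for w n
  proof -
    have "(\<lambda>zu. if snd zu \<le> alpha then Suc M else dec_at g (fst zu, (snd zu - alpha)/(1-alpha)) n) \<in> measurable (joint W q M w) (count_space UNIV)"
      by (rule measurable_If[OF measurable_const measurable_compose[OF phiJ dm[OF w]] sJ]) simp
    then show ?thesis unfolding g'_def dec_at_gmod .
  qed
  have decm': "decoder_measurable W q M g'"
    unfolding decoder_measurable_def
  proof (intro ballI allI)
    fix w n d assume "w \<in> {1..M}"
    then have "Measurable.pred (joint W q M w) (\<lambda>zu. dec_at g' zu n = d)" using dm' by (intro pred_count_space_const1)
    then show "{zu \<in> space (joint W q M w). dec_at g' zu n = d} \<in> sets (joint W q M w)" by (simp add: pred_def)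
  qed
  have stopeq: "(\<integral>\<^sup>+zu. ennreal_of_enat (stop_time g' zu) \<partial>joint W q M w) = ennreal (1-alpha) * (\<integral>\<^sup>+zu. ennreal_of_enat (stop_time g zu) \<partial>joint W q M w)"
    if w: "w \<in> {1..M}" for w
  proof -
    have hm0: "(\<lambda>zu. ennreal_of_enat (stop_time g zu)) \<in> borel_measurable (joint W q M w)"
      using measurable_compose[OF stop_meas[OF dm[OF w]], of ennreal_of_enat borel] by simp
    have hm: "(\<lambda>zu. ennreal_of_enat (stop_time g zu)) \<in> borel_measurable (?N w \<Otimes>\<^sub>M UU)"
      using hm0 unfolding J .
    have "(\<integral>\<^sup>+zu. ennreal_of_enat (stop_time g' zu) \<partial>joint W q M w) = (\<integral>\<^sup>+zu. (if snd zu \<le> alpha then (\<lambda>_. 0) (fst zu) else ennreal_of_enat (stop_time g (fst zu, (snd zu - alpha)/(1-alpha)))) \<partial>(?N w \<Otimes>\<^sub>M UU))"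
      unfolding J g'_def stop_gmod by (intro nn_integral_cong) simp
    also have "\<dots> = ennreal alpha * (\<integral>\<^sup>+z. 0 \<partial>?N w) + ennreal (1-alpha) * (\<integral>\<^sup>+zu. ennreal_of_enat (stop_time g zu) \<partial>(?N w \<Otimes>\<^sub>M UU))"
      by (rule outer[OF hm _ assms(2,3)]) simp
    finally show ?thesis unfolding J by simp
  qed
  have erreq: "measure (joint W q M w) {zu \<in> space (joint W q M w). \<not> decodes_correctly g' w zu}
       = alpha + (1-alpha) * measure (joint W q M w) {zu \<in> space (joint W q M w). \<not> decodes_correctly g w zu}"
    if w: "w \<in> {1..M}" for w
  proof -
    let ?J = "joint W q M w"
    interpret JJ: prob_space ?J by (rule Jprob)
    let ?A = "{zu \<in> space ?J. \<not> decodes_correctly g w zu}"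
    let ?A' = "{zu \<in> space ?J. \<not> decodes_correctly g' w zu}"
    have A: "?A \<in> sets ?J" by (rule dc_meas[OF dm[OF w]])
    have A': "?A' \<in> sets ?J" by (rule dc_meas[OF dm'[OF w]])
    have hm0: "indicator ?A \<in> borel_measurable ?J" using A by simp
    have hm: "indicator ?A \<in> borel_measurable (?N w \<Otimes>\<^sub>M UU)" using hm0 unfolding J .
    have wM: "w \<le> M" using w by simp
    have "emeasure ?J ?A' = (\<integral>\<^sup>+zu. indicator ?A' zu \<partial>?J)" using A' by simp
    also have "\<dots> = (\<integral>\<^sup>+zu. (if snd zu \<le> alpha then (\<lambda>_. 1) (fst zu) else indicator ?A (fst zu, (snd zu - alpha)/(1-alpha))) \<partial>?J)"
    proof (rule nn_integral_cong)
      fix x assume x: "x \<in> space ?J"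
      have "(fst x, (snd x - alpha)/(1-alpha)) \<in> space ?J" using measurable_space[OF phiJ x] .
      then show "indicator ?A' x = (if snd x \<le> alpha then (\<lambda>_. 1) (fst x) else indicator ?A (fst x, (snd x - alpha)/(1-alpha)))"
        using x by (auto simp: indicator_def dc_gmod[OF wM] g'_def)
    qed
    also have "\<dots> = ennreal alpha * (\<integral>\<^sup>+z. 1 \<partial>?N w) + ennreal (1-alpha) * (\<integral>\<^sup>+zu. indicator ?A zu \<partial>?J)"
    proof -
      have o: "(\<integral>\<^sup>+zu. (if snd zu \<le> alpha then (\<lambda>_. 1) (fst zu) else indicator ?A (fst zu, (snd zu - alpha)/(1-alpha))) \<partial>(?N w \<Otimes>\<^sub>M UU))
          = ennreal alpha * (\<integral>\<^sup>+z. 1 \<partial>?N w) + ennreal (1-alpha) * (\<integral>\<^sup>+zu. indicator ?A zu \<partial>(?N w \<Otimes>\<^sub>M UU))"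
        by (rule outer[OF hm _ assms(2,3)]) simp
      show ?thesis using o unfolding J .
    qed
    also have "(\<integral>\<^sup>+z. 1 \<partial>?N w) = 1"
      using prob_space.emeasure_space_1[OF Nprob[of w]] by simp
    also have "(\<integral>\<^sup>+zu. indicator ?A zu \<partial>?J) = emeasure ?J ?A" using A by simp
    finally have "ennreal (measure ?J ?A') = ennreal alpha + ennreal (1-alpha) * ennreal (measure ?J ?A)"
      by (simp add: JJ.emeasure_eq_measure)
    also have "\<dots> = ennreal (alpha + (1-alpha) * measure ?J ?A)"
      using assms(2,3) by (simp add: ennreal_mult ennreal_plus)
    finally show ?thesis
      using assms(2,3) by (subst (asm) ennreal_inj) auto
  qed
  have E': "exp_stop_time W q M g' = ennreal (1-alpha) * exp_stop_time W q M g"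
    unfolding exp_stop_time_def
    by (simp add: stopeq sum_distrib_left ennreal_times_divide)
  have P': "error_prob W q M g' = alpha + (1-alpha) * error_prob W q M g"
  proof -
    have "(\<Sum>w\<in>{1..M}. measure (joint W q M w) {zu \<in> space (joint W q M w). \<not> decodes_correctly g' w zu})
        = (\<Sum>w\<in>{1..M}. alpha + (1-alpha) * measure (joint W q M w) {zu \<in> space (joint W q M w). \<not> decodes_correctly g w zu})"
      by (rule sum.cong) (simp_all add: erreq)
    also have "\<dots> = real M * alpha + (1-alpha) * (\<Sum>w\<in>{1..M}. measure (joint W q M w) {zu \<in> space (joint W q M w). \<not> decodes_correctly g w zu})"
      by (simp add: sum.distrib sum_distrib_left)
    finally show ?thesis unfolding error_prob_def using M1 by (simp add: field_simps)
  qed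
  have "is_code W q g' (R / (1 - alpha)) M (alpha + eps - alpha * eps)"
    unfolding is_code_def
  proof (intro conjI)
    show "1 \<le> M" by (rule M1)
    show "decoder_measurable W q M g'" by (rule decm')
    show "0 < exp_stop_time W q M g'" using Epos assms(3) by (simp add: E' ennreal_zero_less_mult_iff)
    show "exp_stop_time W q M g' < \<infinity>" using Efin by (simp add: E' ennreal_mult_less_top)
    show "R / (1 - alpha) = log 2 (real M) / enn2real (exp_stop_time W q M g')"
      using assms(3) by (simp add: E' enn2real_mult Rdef)
    have "(1 - alpha) * error_prob W q M g \<le> (1-alpha) * eps" using Pe assms(3) by (intro mult_left_mono) auto
    then show "error_prob W q M g' \<le> alpha + eps - alpha * eps" by (simp add: P' algebra_simps)
  qed
  then show ?thesis by blast
qed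

end
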